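(* Let the number of attacked inputs and outputs be bounded by $r$ and $s$, respectively. Under the attack model described in the context, the state of the system can be reconstructed (possibly with bounded delay) from the controller input $u$ and observed output $y$ if and only if the system $(A,B,C,D)$ is $(2r,2s)$-sparse strongly observable.
   Context: Consider the discrete-time LTI system $x(t+1)=Ax(t)+Bu_S(t)$, $y_S(t)=Cx(t)+Du_S(t)$ with $u_S(t)\in\mathbb{R}^m$, $x(t)\in\mathbb{R}^n$, $y_S(t)\in\mathbb{R}^p$, where $\begin{bmatrix}B^T & D^T\end{bmatrix}^T$ has full column rank. Attack model: $u_S(t)=u(t)+w(t)$ and $y(t)=y_S(t)+a(t)$, where $u(t)$ is the controller-designed input, $y(t)$ is the observed output, and $w(t)\in\mathbb{R}^m$, $a(t)\in\mathbb{R}^p$ are arbitrary signals injected by an adversary (no constraints on magnitude, statistics, or timing). The adversary chooses fixed (unknown to the controller) sets $\Gamma_u\subseteq\{1,\dots,m\}$ with $|\Gamma_u|\le r$ and $\overline{\Gamma}_y\subseteq\{1,\dots,p\}$ with $|\overline{\Gamma}_y|\le s$, such that for all $t$ the nonzero components of $w(t)$ lie in $\Gamma_u$ and the nonzero components of $a(t)$ lie in $\overline{\Gamma}_y$. The controller observes only $y(t)$ and knows $u(t)$. An LTI system is strongly observable if for any initial state $x(0)$ and any (unknown) input sequence there exists an integer $\tau$ such that $x(0)$ can be uniquely recovered from $y(0),\dots,y(\tau)$ (equivalently, $y(t)=0$ for all $t$ implies $x(0)=0$). An LTI system $(A,B,C,D)$ with $m$ inputs and $p$ outputs is $(r,s)$-sparse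 strongly observable if for every $\Gamma_u\subseteq\{1,\dots,m\}$ with $|\Gamma_u|\le r$ and every $\Gamma_y\subseteq\{1,\dots,p\}$ with $|\Gamma_y|\ge p-s$, the subsystem $(A, B|_{(\cdot,\Gamma_u)}, C|_{(\Gamma_y,\cdot)}, D|_{(\Gamma_y,\Gamma_u)})$ is strongly observable, where $M|_{(O_1,O_2)}$ denotes the submatrix of $M$ keeping rows indexed by $O_1$ and columns indexed by $O_2$ (a dot meaning all rows/columns). *)

theory Defs
  imports "HOL-Analysis.Analysis"
begin

primrec traj :: "real^'n^'n \<Rightarrow> real^'m^'n \<Rightarrow> real^'n \<Rightarrow> (nat \<Rightarrow> real^'m) \<Rightarrow> nat \<Rightarrow> real^'n"
  where
  "traj A B x0 v 0 = x0"
| "traj A B x0 v (Suc t) = A *v traj A B x0 v t + B *v v t"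

definition sys_out :: "real^'n^'n \<Rightarrow> real^'m^'n \<Rightarrow> real^'n^'p \<Rightarrow> real^'m^'p
    \<Rightarrow> real^'n \<Rightarrow> (nat \<Rightarrow> real^'m) \<Rightarrow> nat \<Rightarrow> real^'p" where
  "sys_out A B C D x0 v t = C *v traj A B x0 v t + D *v v t"

text \<open>Strong observability of the subsystem (A, B|(.,Iu), C|(Oy,.), D|(Oy,Iu)):
  an input of the subsystem is the same as an input of the full system supported on Iu,
  and its output consists of the components of the full output indexed by Oy.\<close>
definition strongly_observable_sub ::
  "real^'n^'n \<Rightarrow> real^'m^'n \<Rightarrow> real^'n^'p \<Rightarrow> real^'m^'p \<Rightarrow> 'm set \<Rightarrow> 'p set \<Rightarrow> bool" where
  "strongly_observable_sub A B C D Iu Oy \<longleftrightarrow>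
     (\<forall>x0 v. (\<forall>t i. i \<notin> Iu \<longrightarrow> v t $ i = 0) \<longrightarrow>
        (\<forall>t. \<forall>i\<in>Oy. sys_out A B C D x0 v t $ i = 0) \<longrightarrow> x0 = 0)"

definition sparse_strongly_observable ::
  "real^'n^'n \<Rightarrow> real^'m^'n \<Rightarrow> real^'n^'p \<Rightarrow> real^'m^'p \<Rightarrow> nat \<Rightarrow> nat \<Rightarrow> bool" where
  "sparse_strongly_observable A B C D r s \<longleftrightarrow>
     (\<forall>Gu Gy. card Gu \<le> r \<longrightarrow> card Gy \<ge> CARD('p) - s \<longrightarrow>
        strongly_observable_sub A B C D (Gu::'m set) (Gy::'p set))"

definition admissible_attack :: "nat \<Rightarrow> nat \<Rightarrow> (nat \<Rightarrow> real^'m) \<Rightarrow> (nat \<Rightarrow> real^'p) \<Rightarrow> bool" where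
  "admissible_attack r s w a \<longleftrightarrow>
     (\<exists>Gu Gyb. card (Gu::'m set) \<le> r \<and> card (Gyb::'p set) \<le> s \<and>
        (\<forall>t i. i \<notin> Gu \<longrightarrow> w t $ i = 0) \<and> (\<forall>t i. i \<notin> Gyb \<longrightarrow> a t $ i = 0))"

definition observed_out :: "real^'n^'n \<Rightarrow> real^'m^'n \<Rightarrow> real^'n^'p \<Rightarrow> real^'m^'p
    \<Rightarrow> real^'n \<Rightarrow> (nat \<Rightarrow> real^'m) \<Rightarrow> (nat \<Rightarrow> real^'m) \<Rightarrow> (nat \<Rightarrow> real^'p) \<Rightarrow> nat \<Rightarrow> real^'p" where
  "observed_out A B C D x0 u w a t = sys_out A B C D x0 (\<lambda>k. u k + w k) t + a t"

definition state_reconstructible ::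
  "real^'n^'n \<Rightarrow> real^'m^'n \<Rightarrow> real^'n^'p \<Rightarrow> real^'m^'p \<Rightarrow> nat \<Rightarrow> nat \<Rightarrow> bool" where
  "state_reconstructible A B C D r s \<longleftrightarrow>
     (\<exists>\<tau>::nat. \<forall>u x0 w a x0' w' a' t.
        admissible_attack r s w a \<longrightarrow> admissible_attack r s w' a' \<longrightarrow>
        (\<forall>k\<le>t+\<tau>. observed_out A B C D x0 u w a k = observed_out A B C D x0' u w' a' k) \<longrightarrow>
        traj A B x0 (\<lambda>k. u k + w k) t = traj A B x0' (\<lambda>k. u k + w' k) t)"

end

theory Submission
  imports Defs
begin

lemma traj_add: "traj A B (x+y) (\<lambda>k. v k + w k) t = traj A B x v t + traj A B y w t"
  by (induct t) (simp_all add: matrix_vector_right_distrib algebra_simps)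

lemma traj_scale: "traj A B (c *\<^sub>R x) (\<lambda>k. c *\<^sub>R v k) t = c *\<^sub>R traj A B x v t"
  by (induct t) (simp_all add: matrix_vector_mult_scaleR scaleR_right_distrib)

lemma traj_diff: "traj A B (x-y) (\<lambda>k. v k - w k) t = traj A B x v t - traj A B y w t"
proof (induct t)
  case (Suc t)
  then show ?case by (simp add: matrix_vector_mult_diff_distrib)
qed simp

lemma traj_shift: "traj A B x0 v (t + k) = traj A B (traj A B x0 v t) (\<lambda>j. v (t+j)) k"
  by (induct k) simp_all

lemma traj_shift1: "traj A B x0 v (Suc t) = traj A B (A *v x0 + B *v v 0) (\<lambda>j. v (Suc j)) t"
  using traj_shift[of A B x0 v 1 t] by (simp add: traj_shift)

lemma out_shift1: "sys_out A B C D x0 v (Suc t) = sys_out A B C D (A *v x0 + B *v v 0) (\<lambda>j. v (Suc j)) t"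
  unfolding sys_out_def by (subst traj_shift1, rule refl)

lemma out_add: "sys_out A B C D (x+y) (\<lambda>k. v k + w k) t = sys_out A B C D x v t + sys_out A B C D y w t"
  by (simp add: sys_out_def traj_add matrix_vector_right_distrib algebra_simps)

lemma out_scale: "sys_out A B C D (c *\<^sub>R x) (\<lambda>k. c *\<^sub>R v k) t = c *\<^sub>R sys_out A B C D x v t"
  by (simp add: sys_out_def traj_scale matrix_vector_mult_scaleR scaleR_right_distrib)

lemma out_diff: "sys_out A B C D (x-y) (\<lambda>k. v k - w k) t = sys_out A B C D x v t - sys_out A B C D y w t"
  by (simp add: sys_out_def traj_diff matrix_vector_mult_diff_distrib algebra_simps)

lemma out_shift: "sys_out A B C D x0 v (t + k) = sys_out A B C D (traj A B x0 v t) (\<lambda>j. v (t+j)) k"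
  by (simp add: sys_out_def traj_shift)

definition Vset where
  "Vset A B C D Iu Oy k = {x. \<exists>v. (\<forall>t i. i \<notin> Iu \<longrightarrow> v t $ i = 0) \<and>
      (\<forall>t<k. \<forall>i\<in>Oy. sys_out A B C D x v t $ i = 0)}"

lemma Vset_subspace: "subspace (Vset A B C D Iu Oy k)"
  unfolding subspace_def
proof (intro conjI ballI allI)
  show "0 \<in> Vset A B C D Iu Oy k"
    unfolding Vset_def
    by (rule CollectI, rule exI[of _ "\<lambda>t. 0"]) (simp add: sys_out_def traj_scale[of _ _ 0 0 "\<lambda>t. 0", simplified])
next
  fix x y assume "x \<in> Vset A B C D Iu Oy k" "y \<in> Vset A B C D Iu Oy k"
  then obtain v w where v: "\<forall>t i. i \<notin> Iu \<longrightarrow> v t $ i = 0" "\<forall>t<k. \<forall>i\<in>Oy. sys_out A B C D x v t $ i = 0"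
    and w: "\<forall>t i. i \<notin> Iu \<longrightarrow> w t $ i = 0" "\<forall>t<k. \<forall>i\<in>Oy. sys_out A B C D y w t $ i = 0"
    unfolding Vset_def by blast
  show "x + y \<in> Vset A B C D Iu Oy k"
    unfolding Vset_def
    by (rule CollectI, rule exI[of _ "\<lambda>t. v t + w t"]) (simp add: out_add v w)
next
  fix c x assume "x \<in> Vset A B C D Iu Oy k"
  then obtain v where v: "\<forall>t i. i \<notin> Iu \<longrightarrow> v t $ i = 0" "\<forall>t<k. \<forall>i\<in>Oy. sys_out A B C D x v t $ i = 0"
    unfolding Vset_def by blast
  show "c *\<^sub>R x \<in> Vset A B C D Iu Oy k"
    unfolding Vset_def
    by (rule CollectI, rule exI[of _ "\<lambda>t. c *\<^sub>R v t"]) (simp add: out_scale v)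
qed

lemma Vset_Suc: "x \<in> Vset A B C D Iu Oy (Suc k) \<longleftrightarrow>
  (\<exists>v0. (\<forall>i. i \<notin> Iu \<longrightarrow> v0 $ i = 0) \<and> (\<forall>i\<in>Oy. (C *v x + D *v v0) $ i = 0) \<and>
        A *v x + B *v v0 \<in> Vset A B C D Iu Oy k)"
proof
  assume "x \<in> Vset A B C D Iu Oy (Suc k)"
  then obtain v where v: "\<forall>t i. i \<notin> Iu \<longrightarrow> v t $ i = 0" "\<forall>t<Suc k. \<forall>i\<in>Oy. sys_out A B C D x v t $ i = 0"
    unfolding Vset_def by blast
  have "A *v x + B *v v 0 \<in> Vset A B C D Iu Oy k"
    unfolding Vset_def
  proof (rule CollectI, rule exI[of _ "\<lambda>j. v (Suc j)"], intro conjI allI impI ballI)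
    fix t i assume "t < k" "i \<in> Oy"
    then have "sys_out A B C D x v (Suc t) $ i = 0" using v by auto
    then show "sys_out A B C D (A *v x + B *v v 0) (\<lambda>j. v (Suc j)) t $ i = 0"
      by (simp only: out_shift1)
  qed (use v in auto)
  moreover have "\<forall>i\<in>Oy. (C *v x + D *v v 0) $ i = 0"
    using v(2)[rule_format, of 0] by (simp add: sys_out_def)
  ultimately show "\<exists>v0. (\<forall>i. i \<notin> Iu \<longrightarrow> v0 $ i = 0) \<and> (\<forall>i\<in>Oy. (C *v x + D *v v0) $ i = 0) \<and>
        A *v x + B *v v0 \<in> Vset A B C D Iu Oy k" using v by blast
next
  assume "\<exists>v0. (\<forall>i. i \<notin> Iu \<longrightarrow> v0 $ i = 0) \<and> (\<forall>i\<in>Oy. (C *v x + D *v v0) $ i = 0) \<and>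
        A *v x + B *v v0 \<in> Vset A B C D Iu Oy k"
  then obtain v0 v where v0: "\<forall>i. i \<notin> Iu \<longrightarrow> v0 $ i = 0" "\<forall>i\<in>Oy. (C *v x + D *v v0) $ i = 0"
    and v: "\<forall>t i. i \<notin> Iu \<longrightarrow> v t $ i = 0"
      "\<forall>t<k. \<forall>i\<in>Oy. sys_out A B C D (A *v x + B *v v0) v t $ i = 0"
    unfolding Vset_def by blast
  show "x \<in> Vset A B C D Iu Oy (Suc k)"
    unfolding Vset_def
  proof (rule CollectI, rule exI[of _ "case_nat v0 v"], intro conjI allI impI ballI)
    fix t i assume "i \<notin> Iu" then show "case_nat v0 v t $ i = 0" using v0 v by (cases t) auto
  next
    fix t i assume t: "t < Suc k" and i: "i \<in> Oy"
    show "sys_out A B C D x (case_nat v0 v) t $ i = 0"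
    proof (cases t)
      case 0 then show ?thesis using v0 i by (simp add: sys_out_def)
    next
      case (Suc t')
      then show ?thesis using v(2) t i
        by (simp only: out_shift1) simp
    qed
  qed
qed

lemma Vset_stable:
  assumes "Vset A B C D Iu Oy (Suc j) = Vset A B C D Iu Oy j" and "j \<le> m"
  shows "Vset A B C D Iu Oy m = Vset A B C D Iu Oy j"
  using assms(2)
proof (induct m rule: dec_induct)
  case base then show ?case by simp
next
  case (step m)
  have "Vset A B C D Iu Oy (Suc m) = Vset A B C D Iu Oy (Suc j)"
    by (rule set_eqI, subst Vset_Suc, subst Vset_Suc, simp add: step.hyps(3))
  then show ?case using assms(1) by simp
qed

lemma Vset_mono: "Vset A B C D Iu Oy (Suc k) \<subseteq> Vset A B C D Iu Oy k"
  unfolding Vset_def by (clarsimp, metis less_SucI)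

lemma Vset_dim:
  fixes A :: "real^'n^'n"
  shows "(\<exists>j<k. Vset A B C D Iu Oy (Suc j) = Vset A B C D Iu Oy j) \<or>
         dim (Vset A B C D Iu Oy k) + k \<le> CARD('n)"
proof (induct k)
  case 0 then show ?case using dim_subset_UNIV_cart by auto
next
  case (Suc k)
  show ?case
  proof (cases "Vset A B C D Iu Oy (Suc k) = Vset A B C D Iu Oy k")
    case True then show ?thesis by auto
  next
    case False
    then have "span (Vset A B C D Iu Oy (Suc k)) \<subset> span (Vset A B C D Iu Oy k)"
      using Vset_mono[of A B C D Iu Oy k] by (simp add: span_eq_iff[THEN iffD2, OF Vset_subspace] psubset_eq)
    then have "dim (Vset A B C D Iu Oy (Suc k)) < dim (Vset A B C D Iu Oy k)"
      by (rule dim_psubset)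
    then show ?thesis using Suc by (auto simp: less_Suc_eq)
  qed
qed

lemma Vset_final:
  fixes A :: "real^'n^'n"
  shows "Vset A B C D Iu Oy (Suc CARD('n)) = Vset A B C D Iu Oy CARD('n)"
proof -
  obtain j where j: "j < Suc CARD('n)" "Vset A B C D Iu Oy (Suc j) = Vset A B C D Iu Oy j"
    using Vset_dim[of "Suc CARD('n)" A B C D Iu Oy] by auto
  show ?thesis using Vset_stable[OF j(2), of "Suc CARD('n)"] Vset_stable[OF j(2), of "CARD('n)"] j(1)
    by simp
qed

lemma Vset_inf:
  fixes A :: "real^'n^'n"
  assumes x: "x \<in> Vset A B C D Iu Oy CARD('n)"
  shows "\<exists>v. (\<forall>t i. i \<notin> Iu \<longrightarrow> v t $ i = 0) \<and> (\<forall>t. \<forall>i\<in>Oy. sys_out A B C D x v t $ i = 0)"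
proof -
  let ?W = "Vset A B C D Iu Oy CARD('n)"
  define P where "P y v0 \<longleftrightarrow> (\<forall>i. i \<notin> Iu \<longrightarrow> v0 $ i = 0) \<and> (\<forall>i\<in>Oy. (C *v y + D *v v0) $ i = 0) \<and>
        A *v y + B *v v0 \<in> ?W" for y v0
  define pick where "pick y = (SOME v0. P y v0)" for y
  have pick: "P y (pick y)" if "y \<in> ?W" for y
  proof -
    from that have "y \<in> Vset A B C D Iu Oy (Suc CARD('n))" using Vset_final by metis
    then have "\<exists>v0. P y v0" unfolding P_def by (subst (asm) Vset_Suc)
    then show ?thesis unfolding pick_def by (rule someI_ex)
  qed
  define st where "st = rec_nat x (\<lambda>_ y. A *v y + B *v pick y)"
  have st0: "st 0 = x" and stS: "st (Suc t) = A *v st t + B *v pick (st t)" for t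
    unfolding st_def by simp_all
  have stW: "st t \<in> ?W" for t
  proof (induct t)
    case 0 then show ?case using x st0 by simp
  next
    case (Suc t) then show ?case using pick[of "st t"] stS unfolding P_def by simp
  qed
  define v where "v t = pick (st t)" for t
  have tr: "traj A B x v t = st t" for t
    by (induct t) (simp_all add: st0 stS v_def)
  show ?thesis
  proof (rule exI[of _ v], intro conjI allI impI ballI)
    fix t i assume "i \<notin> Iu" then show "v t $ i = 0"
      using pick[OF stW[of t]] unfolding P_def v_def by simp
  next
    fix t i assume "i \<in> Oy" then show "sys_out A B C D x v t $ i = 0"
      using pick[OF stW[of t]] unfolding P_def sys_out_def tr by (simp add: v_def)
  qed
qed

lemma split_card:
  fixes G :: "'a set"
  assumes "finite G" "card G \<le> 2 * r"
  obtains G1 where "G1 \<subseteq> G" "card G1 \<le> r" "card (G - G1) \<le> r"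
proof (cases "card G \<le> r")
  case True
  have "card (G - G) \<le> r" by simp
  then show ?thesis using that[of G] True by blast
next
  case False
  then have "r \<le> card G" by simp
  then obtain G1 where G1: "G1 \<subseteq> G" "card G1 = r" "finite G1"
    by (rule obtain_subset_with_card_n)
  have "card (G - G1) = card G - card G1"
    using G1(1) assms(1) by (metis card_Diff_subset finite_subset)
  then have "card (G - G1) \<le> r" using G1(2) assms(2) by simp
  then show ?thesis using that[of G1] G1 by simp
qed

theorem theorem1:
  fixes A :: "real^'n^'n" and B :: "real^'m^'n" and C :: "real^'n^'p" and D :: "real^'m^'p"
    and r s :: nat
  assumes full_col_rank: "\<And>v. B *v v = 0 \<Longrightarrow> D *v v = 0 \<Longrightarrow> v = 0"
  shows "state_reconstructible A B C D r s \<longleftrightarrow> sparse_strongly_observable A B C D (2 * r) (2 * s)"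
proof
  assume R: "state_reconstructible A B C D r s"
  then obtain \<tau> where tau: "\<And>u x0 w a x0' w' a' t.
        admissible_attack r s w a \<Longrightarrow> admissible_attack r s w' a' \<Longrightarrow>
        (\<forall>k\<le>t+\<tau>. observed_out A B C D x0 u w a k = observed_out A B C D x0' u w' a' k) \<Longrightarrow>
        traj A B x0 (\<lambda>k. u k + w k) t = traj A B x0' (\<lambda>k. u k + w' k) t"
    unfolding state_reconstructible_def by blast
  show "sparse_strongly_observable A B C D (2 * r) (2 * s)"
    unfolding sparse_strongly_observable_def strongly_observable_sub_def
  proof (intro allI impI)
    fix Gu :: "'m set" and Gy :: "'p set" and x0 v
    assume cGu: "card Gu \<le> 2 * r" and cGy: "CARD('p) - 2 * s \<le> card Gy"
      and vs: "\<forall>t i. i \<notin> Gu \<longrightarrow> v t $ i = 0"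
      and y0: "\<forall>t. \<forall>i\<in>Gy. sys_out A B C D x0 v t $ i = 0"
    obtain G1 where G1: "G1 \<subseteq> Gu" "card G1 \<le> r" "card (Gu - G1) \<le> r"
      using split_card[OF finite cGu] by blast
    have "card (- Gy) = CARD('p) - card Gy"
      by (simp add: Compl_eq_Diff_UNIV card_Diff_subset)
    then have cH: "card (- Gy) \<le> 2 * s" using cGy by simp
    obtain H1 where H1: "H1 \<subseteq> - Gy" "card H1 \<le> s" "card (- Gy - H1) \<le> s"
      using split_card[OF finite cH] by blast
    define y where "y t = sys_out A B C D x0 v t" for t
    define w where "w t = (\<chi> i. if i \<in> G1 then v t $ i else 0)" for t
    define w' where "w' t = (\<chi> i. if i \<in> G1 then 0 else - (v t $ i))" for t
    define a where "a t = (\<chi> i. if i \<in> H1 then - (y t $ i) else 0)" for t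
    define a' where "a' t = (\<chi> i. if i \<in> H1 \<or> i \<in> Gy then 0 else y t $ i)" for t
    have adm1: "admissible_attack r s w a"
      unfolding admissible_attack_def
      by (rule exI[of _ G1], rule exI[of _ H1]) (simp add: G1 H1 w_def a_def)
    have adm2: "admissible_attack r s w' a'"
      unfolding admissible_attack_def
      by (rule exI[of _ "Gu - G1"], rule exI[of _ "- Gy - H1"]) (simp add: G1 H1 w'_def a'_def vs)
    have wv: "(\<lambda>k. (0 + w k) - (0 + w' k)) = v"
      by (rule ext) (simp add: vec_eq_iff w_def w'_def)
    have obs: "observed_out A B C D x0 (\<lambda>_. 0) w a k = observed_out A B C D 0 (\<lambda>_. 0) w' a' k" for k
    proof -
      have "sys_out A B C D x0 (\<lambda>k. 0 + w k) k - sys_out A B C D 0 (\<lambda>k. 0 + w' k) k = y k"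
        using out_diff[of A B C D x0 0 "\<lambda>k. 0 + w k" "\<lambda>k. 0 + w' k" k] wv by (simp add: y_def)
      then have "\<forall>i. sys_out A B C D x0 (\<lambda>k. 0 + w k) k $ i - sys_out A B C D 0 (\<lambda>k. 0 + w' k) k $ i = y k $ i"
        by (simp add: vec_eq_iff)
      moreover have "\<forall>i\<in>Gy. y k $ i = 0" using y0 by (simp add: y_def)
      ultimately show ?thesis
        unfolding observed_out_def vec_eq_iff
      proof (intro allI)
        fix i
        assume h1: "\<forall>i. sys_out A B C D x0 (\<lambda>k. 0 + w k) k $ i - sys_out A B C D 0 (\<lambda>k. 0 + w' k) k $ i = y k $ i"
          and h2: "\<forall>i\<in>Gy. y k $ i = 0"
        have e: "sys_out A B C D x0 (\<lambda>k. 0 + w k) k $ i = sys_out A B C D 0 (\<lambda>k. 0 + w' k) k $ i + y k $ i"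
          using h1 by (metis diff_add_cancel add.commute)
        show "(sys_out A B C D x0 (\<lambda>k. 0 + w k) k + a k) $ i = (sys_out A B C D 0 (\<lambda>k. 0 + w' k) k + a' k) $ i"
          using h2 unfolding vector_add_component e by (simp add: a_def a'_def)
      qed
    qed
    have "traj A B x0 (\<lambda>k. 0 + w k) 0 = traj A B 0 (\<lambda>k. 0 + w' k) 0"
      by (rule tau[OF adm1 adm2]) (simp add: obs)
    then show "x0 = 0" by simp
  qed
next
  assume S: "sparse_strongly_observable A B C D (2 * r) (2 * s)"
  show "state_reconstructible A B C D r s"
    unfolding state_reconstructible_def
  proof (rule exI[of _ "CARD('n)"], intro allI impI)
    fix u x0 w a x0' w' a' t
    assume adm1: "admissible_attack r s w a" and adm2: "admissible_attack r s w' a'"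
      and eq: "\<forall>k\<le>t + CARD('n). observed_out A B C D x0 u w a k = observed_out A B C D x0' u w' a' k"
    obtain Gu Gyb where G: "card (Gu::'m set) \<le> r" "card (Gyb::'p set) \<le> s"
        "\<forall>t i. i \<notin> Gu \<longrightarrow> w t $ i = 0" "\<forall>t i. i \<notin> Gyb \<longrightarrow> a t $ i = 0"
      using adm1 unfolding admissible_attack_def by blast
    obtain Gu' Gyb' where G': "card (Gu'::'m set) \<le> r" "card (Gyb'::'p set) \<le> s"
        "\<forall>t i. i \<notin> Gu' \<longrightarrow> w' t $ i = 0" "\<forall>t i. i \<notin> Gyb' \<longrightarrow> a' t $ i = 0"
      using adm2 unfolding admissible_attack_def by blast
    let ?Iu = "Gu \<union> Gu'" and ?Oy = "- (Gyb \<union> Gyb')"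
    have cIu: "card ?Iu \<le> 2 * r" using card_Un_le[of Gu Gu'] G G' by simp
    have "card ?Oy = CARD('p) - card (Gyb \<union> Gyb')" by (simp add: Compl_eq_Diff_UNIV card_Diff_subset)
    moreover have "card (Gyb \<union> Gyb') \<le> 2 * s" using card_Un_le[of Gyb Gyb'] G G' by simp
    ultimately have cOy: "card ?Oy \<ge> CARD('p) - 2 * s" by simp
    have SO: "strongly_observable_sub A B C D ?Iu ?Oy"
      using S[unfolded sparse_strongly_observable_def, rule_format, OF cIu cOy] .
    define d where "d = x0 - x0'"
    define dv where "dv k = (u k + w k) - (u k + w' k)" for k
    have trd: "traj A B d dv k = traj A B x0 (\<lambda>k. u k + w k) k - traj A B x0' (\<lambda>k. u k + w' k) k" for k
      unfolding d_def dv_def by (rule traj_diff)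
    have outd: "sys_out A B C D d dv k = sys_out A B C D x0 (\<lambda>k. u k + w k) k - sys_out A B C D x0' (\<lambda>k. u k + w' k) k" for k
      unfolding d_def dv_def by (rule out_diff)
    define z where "z = traj A B d dv t"
    have dvs: "\<forall>k i. i \<notin> ?Iu \<longrightarrow> dv k $ i = 0" using G(3) G'(3) by (simp add: dv_def)
    have "z \<in> Vset A B C D ?Iu ?Oy CARD('n)"
      unfolding Vset_def
    proof (rule CollectI, rule exI[of _ "\<lambda>j. dv (t + j)"], intro conjI allI impI ballI)
      fix k i assume "i \<notin> ?Iu" then show "dv (t + k) $ i = 0" using dvs by blast
    next
      fix j i assume j: "j < CARD('n)" and i: "i \<in> ?Oy"
      have "observed_out A B C D x0 u w a (t+j) $ i = observed_out A B C D x0' u w' a' (t+j) $ i"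
        using eq j by simp
      moreover have "a (t+j) $ i = 0" "a' (t+j) $ i = 0" using G(4) G'(4) i by auto
      ultimately have "sys_out A B C D d dv (t+j) $ i = 0"
        unfolding outd observed_out_def by simp
      then show "sys_out A B C D z (\<lambda>j. dv (t + j)) j $ i = 0"
        unfolding z_def by (simp add: out_shift[symmetric])
    qed
    then have "\<exists>v. (\<forall>t i. i \<notin> ?Iu \<longrightarrow> v t $ i = 0) \<and> (\<forall>t. \<forall>i\<in>?Oy. sys_out A B C D z v t $ i = 0)"
      by (rule Vset_inf)
    then obtain v where v: "\<forall>t i. i \<notin> ?Iu \<longrightarrow> v t $ i = 0" "\<forall>t. \<forall>i\<in>?Oy. sys_out A B C D z v t $ i = 0"
      by blast
    have "z = 0" using SO[unfolded strongly_observable_sub_def, rule_format, OF v(1)[rule_format] v(2)[rule_format]] .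
    then show "traj A B x0 (\<lambda>k. u k + w k) t = traj A B x0' (\<lambda>k. u k + w' k) t"
      using trd[of t] unfolding z_def by simp
  qed
qed

end
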